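(* Let $\mathbf G$ be a power-associative loop and $\Gamma^\pm=\mathcal G^\pm(\mathbf G)$. For each connected component $\Phi$ of $\Gamma^\pm$ that contains an element of infinite order, there exist connected components $\Psi_1,\Psi_2$ of $\mathcal G^+(\mathbf G)$ such that: (1) $V(\Phi)=V(\Psi_1)\cup V(\Psi_2)$; (2) $\Psi_1\cong\Psi_2$; (3) $\Phi\cong\Psi_1\boxtimes P_2$; (4) $\Psi_1\cong\Phi/\!\equiv_{\Gamma^\pm}$.
   Context: A loop is power-associative if every subloop generated by one element is a group; powers are computed in $\langle x\rangle$. The $Z^\pm$-power graph $\mathcal G^{\pm}(\mathbf G)$ has vertex set $G$, distinct $x,y$ adjacent iff $y=x^n$ or $x=y^n$ for some $n\in\mathbb Z\setminus\{0\}$; the $N$-power graph $\mathcal G^{+}(\mathbf G)$ is defined the same way with $n$ a positive integer. $P_2$ is the path on two vertices (a single edge). The strong product $\Gamma\boxtimes\Delta$ has vertex set $V(\Gamma)\times V(\Delta)$, with distinct $(x_1,y_1),(x_2,y_2)$ adjacent iff ($x_1=x_2$ or $x_1\sim x_2$) and ($y_1=y_2$ or $y_1\sim y_2$). For a graph $\Gamma$, $x\equiv_\Gamma y$ means $x,y$ have the same closed neighborhood in $\Gamma$; $\Phi/\!\equiv_{\Gamma^\pm}$ denotes the graph whose vertices are the $\equiv_{\Gamma^\pm}$-classes contained in $V(\Phi)$, two distinct classes being adjacent iff some (equivalently every) element of one is adjacent to some (every) element of the other. *)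

theory Defs
  imports Main
begin

definition loop :: "('a \<Rightarrow> 'a \<Rightarrow> 'a) \<Rightarrow> 'a \<Rightarrow> bool" where
  "loop m e \<longleftrightarrow> (\<forall>x. m e x = x \<and> m x e = x)
     \<and> (\<forall>a b. \<exists>!x. m a x = b) \<and> (\<forall>a b. \<exists>!y. m y a = b)"

definition ldiv :: "('a \<Rightarrow> 'a \<Rightarrow> 'a) \<Rightarrow> 'a \<Rightarrow> 'a \<Rightarrow> 'a" where
  "ldiv m a b = (THE x. m a x = b)"

definition rdiv :: "('a \<Rightarrow> 'a \<Rightarrow> 'a) \<Rightarrow> 'a \<Rightarrow> 'a \<Rightarrow> 'a" where
  "rdiv m b a = (THE y. m y a = b)"

inductive_set gen :: "('a \<Rightarrow> 'a \<Rightarrow> 'a) \<Rightarrow> 'a \<Rightarrow> 'a \<Rightarrow> 'a set"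
  for m :: "'a \<Rightarrow> 'a \<Rightarrow> 'a" and e :: 'a and x :: 'a where
  gen_base: "x \<in> gen m e x"
| gen_unit: "e \<in> gen m e x"
| gen_mult: "a \<in> gen m e x \<Longrightarrow> b \<in> gen m e x \<Longrightarrow> m a b \<in> gen m e x"
| gen_ldiv: "a \<in> gen m e x \<Longrightarrow> b \<in> gen m e x \<Longrightarrow> ldiv m a b \<in> gen m e x"
| gen_rdiv: "a \<in> gen m e x \<Longrightarrow> b \<in> gen m e x \<Longrightarrow> rdiv m a b \<in> gen m e x"

text \<open>Power-associative: every one-generated subloop is a group, i.e. its
  operation (a loop operation) is associative.\<close>
definition power_assoc :: "('a \<Rightarrow> 'a \<Rightarrow> 'a) \<Rightarrow> 'a \<Rightarrow> bool" where
  "power_assoc m e \<longleftrightarrow> (\<forall>x. \<forall>a\<in>gen m e x. \<forall>b\<in>gen m e x. \<forall>c\<in>gen m e x.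
      m (m a b) c = m a (m b c))"

primrec npow :: "('a \<Rightarrow> 'a \<Rightarrow> 'a) \<Rightarrow> 'a \<Rightarrow> 'a \<Rightarrow> nat \<Rightarrow> 'a" where
  "npow m e x 0 = e"
| "npow m e x (Suc n) = m (npow m e x n) x"

text \<open>Inverse of g: the unique z with z*g = e (in the group generated by x
  this is the group inverse).\<close>
definition linv :: "('a \<Rightarrow> 'a \<Rightarrow> 'a) \<Rightarrow> 'a \<Rightarrow> 'a \<Rightarrow> 'a" where
  "linv m e g = rdiv m e g"

definition zpow :: "('a \<Rightarrow> 'a \<Rightarrow> 'a) \<Rightarrow> 'a \<Rightarrow> 'a \<Rightarrow> int \<Rightarrow> 'a" where
  "zpow m e x n = (if 0 \<le> n then npow m e x (nat n) else linv m e (npow m e x (nat (- n))))"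

definition infinite_order :: "('a \<Rightarrow> 'a \<Rightarrow> 'a) \<Rightarrow> 'a \<Rightarrow> 'a \<Rightarrow> bool" where
  "infinite_order m e x \<longleftrightarrow> (\<forall>n::nat. n \<ge> 1 \<longrightarrow> npow m e x n \<noteq> e)"

text \<open>A (simple) graph: vertex set and adjacency relation (only its
  restriction to the vertex set matters).\<close>
type_synonym 'v graph = "'v set \<times> ('v \<Rightarrow> 'v \<Rightarrow> bool)"

abbreviation verts :: "'v graph \<Rightarrow> 'v set" where "verts G \<equiv> fst G"
abbreviation adj :: "'v graph \<Rightarrow> 'v \<Rightarrow> 'v \<Rightarrow> bool" where "adj G \<equiv> snd G"

definition zpower_graph :: "('a \<Rightarrow> 'a \<Rightarrow> 'a) \<Rightarrow> 'a \<Rightarrow> 'a graph" where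
  "zpower_graph m e = (UNIV, (\<lambda>x y. x \<noteq> y \<and>
      (\<exists>n::int. n \<noteq> 0 \<and> (y = zpow m e x n \<or> x = zpow m e y n))))"

definition npower_graph :: "('a \<Rightarrow> 'a \<Rightarrow> 'a) \<Rightarrow> 'a \<Rightarrow> 'a graph" where
  "npower_graph m e = (UNIV, (\<lambda>x y. x \<noteq> y \<and>
      (\<exists>n::nat. n > 0 \<and> (y = npow m e x n \<or> x = npow m e y n))))"

definition induced :: "'v graph \<Rightarrow> 'v set \<Rightarrow> 'v graph" where
  "induced G S = (S, (\<lambda>x y. x \<in> S \<and> y \<in> S \<and> adj G x y))"

definition reachable :: "'v graph \<Rightarrow> 'v \<Rightarrow> 'v \<Rightarrow> bool" where
  "reachable G = (\<lambda>x y. x \<in> verts G \<and> y \<in> verts G \<and> adj G x y)\<^sup>*\<^sup>*"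

definition component_of :: "'v graph \<Rightarrow> 'v graph \<Rightarrow> bool" where
  "component_of P G \<longleftrightarrow> (\<exists>x\<in>verts G. P = induced G {y\<in>verts G. reachable G x y})"

definition graph_iso :: "'v graph \<Rightarrow> 'w graph \<Rightarrow> bool" where
  "graph_iso G H \<longleftrightarrow> (\<exists>f. bij_betw f (verts G) (verts H) \<and>
      (\<forall>x\<in>verts G. \<forall>y\<in>verts G. adj G x y \<longleftrightarrow> adj H (f x) (f y)))"

definition strong_product :: "'v graph \<Rightarrow> 'w graph \<Rightarrow> ('v \<times> 'w) graph" where
  "strong_product G H = (verts G \<times> verts H, (\<lambda>(x1, y1) (x2, y2).
      (x1, y1) \<noteq> (x2, y2) \<and> (x1 = x2 \<or> adj G x1 x2) \<and> (y1 = y2 \<or> adj H y1 y2)))"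

definition P2 :: "nat graph" where
  "P2 = ({0, 1}, (\<lambda>x y. x \<noteq> y))"

definition closed_nbhd :: "'v graph \<Rightarrow> 'v \<Rightarrow> 'v set" where
  "closed_nbhd G x = insert x {y\<in>verts G. adj G x y}"

definition nbhd_class :: "'v graph \<Rightarrow> 'v \<Rightarrow> 'v set" where
  "nbhd_class G x = {y\<in>verts G. closed_nbhd G y = closed_nbhd G x}"

definition quotient_graph :: "'v graph \<Rightarrow> 'v graph \<Rightarrow> 'v set graph" where
  "quotient_graph P G = ({C. \<exists>x\<in>verts G. C = nbhd_class G x \<and> C \<subseteq> verts P},
      (\<lambda>C D. C \<noteq> D \<and> (\<exists>a\<in>C. \<exists>b\<in>D. adj G a b)))"

end

theory Submission
  imports Defs
begin

locale pal =
  fixes m :: "'a \<Rightarrow> 'a \<Rightarrow> 'a" and e :: 'a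
  assumes lp: "loop m e" and pa: "power_assoc m e"
begin

abbreviation "pw \<equiv> npow m e"
abbreviation "iv \<equiv> linv m e"

lemma lid[simp]: "m e x = x" and rid[simp]: "m x e = x"
  using lp unfolding loop_def by auto

lemma lcancel: "m a x = m a y \<Longrightarrow> x = y"
  using lp unfolding loop_def by metis

lemma rcancel: "m x a = m y a \<Longrightarrow> x = y"
  using lp unfolding loop_def by metis

lemma iv_l: "m (iv g) g = e"
proof -
  have "\<exists>!y. m y g = e" using lp unfolding loop_def by blast
  then show ?thesis unfolding linv_def rdiv_def by (rule theI')
qed

lemma asc: "a \<in> gen m e x \<Longrightarrow> b \<in> gen m e x \<Longrightarrow> c \<in> gen m e x \<Longrightarrow> m (m a b) c = m a (m b c)"
  using pa unfolding power_assoc_def by blast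

lemma iv_gen: "g \<in> gen m e x \<Longrightarrow> iv g \<in> gen m e x"
  unfolding linv_def by (intro gen_rdiv gen_unit)

lemma pw_gen: "g \<in> gen m e x \<Longrightarrow> pw g n \<in> gen m e x"
  by (induction n) (auto intro: gen_mult gen_unit)

lemma pw_one[simp]: "pw x 1 = x" by simp

lemma pw_e[simp]: "pw e n = e" by (induction n) auto

lemma pw_add: "pw x (a + b) = m (pw x a) (pw x b)"
proof (induction b)
  case 0 then show ?case by simp
next
  case (Suc b)
  have "pw x (a + Suc b) = m (m (pw x a) (pw x b)) x" using Suc by simp
  also have "\<dots> = m (pw x a) (m (pw x b) x)"
    by (intro asc[where x=x] pw_gen gen_base)
  finally show ?case by simp
qed

lemma pw_mult: "pw x (a * b) = pw (pw x a) b"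
proof (induction b)
  case 0 then show ?case by simp
next
  case (Suc b)
  have "pw x (a * Suc b) = pw x (a * b + a)" by (simp add: add.commute)
  also have "\<dots> = m (pw x (a*b)) (pw x a)" by (rule pw_add)
  finally show ?case using Suc by simp
qed

lemma pw_comm: "pw (pw x a) b = pw (pw x b) a"
  by (metis pw_mult mult.commute)

lemma iv_r: "g \<in> gen m e x \<Longrightarrow> m g (iv g) = e"
proof -
  assume g: "g \<in> gen m e x"
  have "m (m g (iv g)) g = m g (m (iv g) g)" by (intro asc[where x=x] g iv_gen)
  also have "\<dots> = m e g" by (simp add: iv_l)
  finally show ?thesis by (rule rcancel)
qed

lemma iv_iv[simp]: "iv (iv g) = g"
proof -
  have "m (iv (iv g)) (iv g) = m g (iv g)" using iv_l iv_r[OF gen_base] by simp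
  then show ?thesis by (rule rcancel)
qed

lemma iv_inj: "iv a = iv b \<longleftrightarrow> a = b" by (metis iv_iv)

lemma pw_iv: "pw (iv y) k = iv (pw y k)"
proof -
  have "m (pw (iv y) k) (pw y k) = e"
  proof (induction k)
    case 0 then show ?case by simp
  next
    case (Suc k)
    have G: "iv y \<in> gen m e y" "y \<in> gen m e y" by (auto intro: iv_gen gen_base)
    have A: "pw (iv y) k \<in> gen m e y" "pw y k \<in> gen m e y" using G by (auto intro: pw_gen)
    have "pw y (Suc k) = pw y (1 + k)" by simp
    also have "\<dots> = m y (pw y k)" by (simp only: pw_add pw_one)
    finally have 1: "pw y (Suc k) = m y (pw y k)" .
    have "m (pw (iv y) (Suc k)) (pw y (Suc k)) = m (m (pw (iv y) k) (iv y)) (m y (pw y k))"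
      using 1 by simp
    also have "\<dots> = m (pw (iv y) k) (m (iv y) (m y (pw y k)))"
      using G A by (intro asc gen_mult)
    also have "m (iv y) (m y (pw y k)) = m (m (iv y) y) (pw y k)"
      using G A by (intro asc[symmetric])
    finally show ?case using Suc by (simp add: iv_l)
  qed
  then have "m (pw (iv y) k) (pw y k) = m (iv (pw y k)) (pw y k)" by (simp add: iv_l)
  then show ?thesis by (rule rcancel)
qed

lemma pw_cancel:
  assumes io: "infinite_order m e x" and eq: "pw x a = pw x b" shows "a = b"
proof (rule ccontr)
  assume ne: "a \<noteq> b"
  have *: "pw x c \<noteq> pw x (c + d)" if "d \<ge> 1" for c d
  proof
    assume "pw x c = pw x (c + d)"
    then have "m (pw x c) e = m (pw x c) (pw x d)" by (simp add: pw_add)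
    then have "pw x d = e" by (metis lcancel)
    then show False using io that unfolding infinite_order_def by blast
  qed
  show False
  proof (cases "a < b")
    case True
    have "b - a \<ge> 1" using True by simp
    from *[OF this, of a] show False using eq True by simp
  next
    case False
    have "a - b \<ge> 1" using False ne by simp
    from *[OF this, of b] show False using eq False by simp
  qed
qed

definition PC where "PC x y \<longleftrightarrow> (\<exists>a b. a > 0 \<and> b > 0 \<and> pw x a = pw y b)"
definition Nrel where "Nrel x y \<longleftrightarrow> (\<exists>n::nat. n > 0 \<and> (y = pw x n \<or> x = pw y n))"
definition Zrel where "Zrel x y \<longleftrightarrow> (\<exists>n::int. n \<noteq> 0 \<and> (y = zpow m e x n \<or> x = zpow m e y n))"

lemma N_adj: "adj (npower_graph m e) x y = (x \<noteq> y \<and> Nrel x y)"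
  unfolding npower_graph_def Nrel_def by simp
lemma Z_adj: "adj (zpower_graph m e) x y = (x \<noteq> y \<and> Zrel x y)"
  unfolding zpower_graph_def Zrel_def by simp
lemma N_verts[simp]: "verts (npower_graph m e) = UNIV" unfolding npower_graph_def by simp
lemma Z_verts[simp]: "verts (zpower_graph m e) = UNIV" unfolding zpower_graph_def by simp

lemma Zrel_alt: "Zrel x y \<longleftrightarrow> (\<exists>k>0. y = pw x k \<or> x = pw y k \<or> y = iv (pw x k) \<or> x = iv (pw y k))"
proof
  assume "Zrel x y"
  then obtain n :: int where n: "n \<noteq> 0" "y = zpow m e x n \<or> x = zpow m e y n"
    unfolding Zrel_def by blast
  show "\<exists>k>0. y = pw x k \<or> x = pw y k \<or> y = iv (pw x k) \<or> x = iv (pw y k)"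
  proof (cases "n > 0")
    case True then show ?thesis using n by (intro exI[of _ "nat n"]) (auto simp: zpow_def)
  next
    case False then show ?thesis using n by (intro exI[of _ "nat (-n)"]) (auto simp: zpow_def)
  qed
next
  assume "\<exists>k>0. y = pw x k \<or> x = pw y k \<or> y = iv (pw x k) \<or> x = iv (pw y k)"
  then obtain k where k: "k > 0" "y = pw x k \<or> x = pw y k \<or> y = iv (pw x k) \<or> x = iv (pw y k)" by blast
  show "Zrel x y"
  proof (cases "y = pw x k \<or> x = pw y k")
    case True then show ?thesis unfolding Zrel_def using k
      by (intro exI[of _ "int k"]) (auto simp: zpow_def)
  next
    case False then show ?thesis unfolding Zrel_def using k
      by (intro exI[of _ "- int k"]) (auto simp: zpow_def)
  qed
qed

lemma Zrel_sym: "Zrel x y \<Longrightarrow> Zrel y x" unfolding Zrel_alt by blast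
lemma Zrel_refl[simp]: "Zrel x x" unfolding Zrel_alt by (intro exI[of _ 1]) simp
lemma Nrel_refl[simp]: "Nrel x x" unfolding Nrel_def by (intro exI[of _ 1]) simp
lemma Nrel_Zrel: "Nrel x y \<Longrightarrow> Zrel x y" unfolding Zrel_alt Nrel_def by blast

lemma Zrel_iv1: "Zrel (iv x) y \<Longrightarrow> Zrel x y"
  unfolding Zrel_alt by (auto simp: pw_iv) (metis iv_iv)+

lemma Zrel_iv_left[simp]: "Zrel (iv x) y \<longleftrightarrow> Zrel x y"
  using Zrel_iv1[of x y] Zrel_iv1[of "iv x" y] by auto
lemma Zrel_iv_right[simp]: "Zrel x (iv y) \<longleftrightarrow> Zrel x y"
  using Zrel_iv_left Zrel_sym by blast

lemma Nrel_iv1: "Nrel x y \<Longrightarrow> Nrel (iv x) (iv y)"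
  unfolding Nrel_def by (auto simp: pw_iv)
lemma Nrel_iv[simp]: "Nrel (iv x) (iv y) \<longleftrightarrow> Nrel x y"
  using Nrel_iv1[of x y] Nrel_iv1[of "iv x" "iv y"] by auto

lemma PC_refl[simp]: "PC x x" unfolding PC_def by (intro exI[of _ 1]) simp
lemma PC_sym: "PC x y \<Longrightarrow> PC y x" unfolding PC_def by metis
lemma PC_trans: assumes "PC x y" "PC y z" shows "PC x z"
proof -
  obtain a b where ab: "a > 0" "b > 0" "pw x a = pw y b" using assms(1) unfolding PC_def by blast
  obtain c d where cd: "c > 0" "d > 0" "pw y c = pw z d" using assms(2) unfolding PC_def by blast
  have "pw x (a*c) = pw z (d*b)"
    by (metis ab(3) cd(3) pw_mult pw_comm)
  then show ?thesis unfolding PC_def using ab cd by (intro exI[of _ "a*c"] exI[of _ "d*b"]) simp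
qed
lemma PC_iv: "PC x y \<Longrightarrow> PC (iv x) (iv y)" unfolding PC_def by (metis pw_iv)
lemma Nrel_PC: "Nrel x y \<Longrightarrow> PC x y"
  unfolding Nrel_def PC_def by (metis pw_one zero_less_one)

lemma PC_io: assumes "infinite_order m e x" "PC x y" shows "infinite_order m e y"
  unfolding infinite_order_def
proof (intro allI impI notI)
  fix k :: nat assume k: "k \<ge> 1" "pw y k = e"
  obtain a b where ab: "a > 0" "b > 0" "pw x a = pw y b" using assms(2) unfolding PC_def by blast
  have "pw x (a*k) = e" by (metis ab(3) k(2) pw_mult pw_comm pw_e)
  moreover have "a * k \<ge> 1" using ab k by simp
  ultimately show False using assms(1) unfolding infinite_order_def by blast
qed

lemma not_PC_iv: assumes "infinite_order m e x" shows "\<not> PC x (iv x)"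
proof
  assume "PC x (iv x)"
  then obtain a b where ab: "a > 0" "b > 0" "pw x a = pw (iv x) b" unfolding PC_def by blast
  have "pw x (a + b) = m (iv (pw x b)) (pw x b)" by (simp add: pw_add ab(3) pw_iv)
  then have "pw x (a+b) = e" by (simp add: iv_l)
  then show False using assms ab unfolding infinite_order_def by simp
qed

lemma Zrel_PC: "Zrel y z \<Longrightarrow> PC y z \<or> PC (iv y) z"
  unfolding Zrel_alt
proof (elim exE conjE disjE)
  fix k :: nat assume k: "k > 0"
  { assume "z = pw y k" then show ?thesis using k unfolding PC_def by (metis pw_one zero_less_one) }
  { assume "y = pw z k" then show ?thesis using k unfolding PC_def by (metis pw_one zero_less_one) }
  { assume "z = iv (pw y k)" then have "z = pw (iv y) k" by (simp add: pw_iv)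
    then show ?thesis using k unfolding PC_def by (metis pw_one zero_less_one) }
  { assume "y = iv (pw z k)" then have "iv y = pw z k" by simp
    then show ?thesis using k unfolding PC_def by (metis pw_one zero_less_one) }
qed

lemma rtranclp_sym: assumes "\<And>a b. r a b \<Longrightarrow> r b a" "r\<^sup>*\<^sup>* x y" shows "r\<^sup>*\<^sup>* y x"
  using assms(2)
proof (induction rule: rtranclp_induct)
  case base then show ?case by simp
next
  case (step y z) then show ?case using assms(1) by (meson converse_rtranclp_into_rtranclp)
qed

lemma N_reach: "reachable (npower_graph m e) x y \<longleftrightarrow> PC x y"
proof
  assume "reachable (npower_graph m e) x y"
  then show "PC x y" unfolding reachable_def N_verts
    by (induction rule: rtranclp_induct) (auto simp: N_adj dest: Nrel_PC intro: PC_trans)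
next
  assume "PC x y"
  then obtain a b where ab: "a > 0" "b > 0" "pw x a = pw y b" unfolding PC_def by blast
  define w where "w = pw x a"
  let ?r = "\<lambda>x y. x \<in> verts (npower_graph m e) \<and> y \<in> verts (npower_graph m e) \<and> adj (npower_graph m e) x y"
  have 1: "?r\<^sup>*\<^sup>* x w"
    by (cases "x = w") (auto simp: N_adj Nrel_def w_def intro!: r_into_rtranclp exI[of _ a] ab)
  have 2: "?r\<^sup>*\<^sup>* w y"
    by (cases "y = w") (auto simp: N_adj Nrel_def w_def ab(3) intro!: r_into_rtranclp exI[of _ b] ab)
  show "reachable (npower_graph m e) x y" unfolding reachable_def using 1 2 by simp
qed

end

locale palx = pal +
  fixes x0 assumes io: "infinite_order m e x0"
begin

definition "S1 = {y. PC x0 y}"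
definition "S2 = {y. PC (iv x0) y}"
definition "S = S1 \<union> S2"
definition "rp z = (if z \<in> S1 then z else iv z)"

lemma S2_iff: "y \<in> S2 \<longleftrightarrow> iv y \<in> S1"
  unfolding S1_def S2_def by (metis PC_iv iv_iv mem_Collect_eq)
lemma S1_iff: "y \<in> S1 \<longleftrightarrow> iv y \<in> S2"
  using S2_iff by simp
lemma ivS1: "y \<in> S1 \<Longrightarrow> iv y \<in> S2" using S1_iff by blast
lemma ivS2: "y \<in> S2 \<Longrightarrow> iv y \<in> S1" using S2_iff by blast
lemma disj: "y \<in> S1 \<Longrightarrow> y \<in> S2 \<Longrightarrow> False"
  unfolding S1_def S2_def using not_PC_iv[OF io] by (metis PC_sym PC_trans mem_Collect_eq)
lemma io_S1: "y \<in> S1 \<Longrightarrow> infinite_order m e y"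
  unfolding S1_def using PC_io io by blast

lemma S_closed: assumes "y \<in> S" "Zrel y z" shows "z \<in> S"
proof -
  have "PC x0 y \<or> PC (iv x0) y" using assms(1) unfolding S_def S1_def S2_def by auto
  moreover have "PC y z \<or> PC (iv y) z" using Zrel_PC[OF assms(2)] .
  moreover have "PC (iv x0) (iv y)" if "PC x0 y" using PC_iv that by blast
  moreover have "PC x0 (iv y)" if "PC (iv x0) y" using PC_iv[OF that] by simp
  ultimately have "PC x0 z \<or> PC (iv x0) z" by (meson PC_trans)
  then show ?thesis unfolding S_def S1_def S2_def by auto
qed

lemma K: assumes "a \<in> S1" "b \<in> S1" "Zrel a b" shows "Nrel a b"
proof -
  obtain k where k: "k > 0" "b = pw a k \<or> a = pw b k \<or> b = iv (pw a k) \<or> a = iv (pw b k)"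
    using assms(3) unfolding Zrel_alt by blast
  have no: False if "u \<in> S1" "v \<in> S1" "v = iv (pw u k)" for u v
  proof -
    have "v = pw (iv u) k" using that by (simp add: pw_iv)
    then have "PC (iv u) v" unfolding PC_def using k by (metis pw_one zero_less_one)
    moreover have "iv u \<in> S2" using that ivS1 by blast
    ultimately have "v \<in> S2" unfolding S2_def by (auto intro: PC_trans)
    then show False using disj that by blast
  qed
  show ?thesis using k no assms unfolding Nrel_def by blast
qed

lemma rp: assumes "z \<in> S" shows "rp z \<in> S1" "z = rp z \<or> z = iv (rp z)" "Zrel (rp z) w \<longleftrightarrow> Zrel z w"
  using assms ivS2 unfolding rp_def S_def by auto

lemma H: assumes "a \<in> S1" "b \<in> S1" "\<forall>w. Zrel a w = Zrel b w" "b = pw a n" "n > 0" shows "a = b"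
proof (rule ccontr)
  assume ne: "a \<noteq> b"
  then have "n \<noteq> 1" using assms by auto
  then have n2: "n \<ge> 2" using assms by simp
  define z where "z = pw a (n+1)"
  have "Zrel a z" unfolding Zrel_alt z_def by (intro exI[of _ "n+1"]) simp
  then have zb: "Zrel b z" using assms by simp
  have "pw a (n+1) = pw z 1" using z_def by simp
  then have "PC a z" unfolding PC_def by (metis zero_less_one add_gr_0)
  then have "z \<in> S1" using assms(1) unfolding S1_def by (auto intro: PC_trans)
  then have "Nrel b z" using K assms zb by blast
  then obtain k where k: "k > 0" "z = pw b k \<or> b = pw z k" unfolding Nrel_def by blast
  have ia: "infinite_order m e a" using io_S1 assms(1) .
  show False
  proof (cases "z = pw b k")
    case True
    then have "pw a (n+1) = pw a (n*k)" using assms(4) z_def by (simp add: pw_mult)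
    then have eq: "n + 1 = n * k" using pw_cancel[OF ia] by blast
    show False
    proof (cases "k = 1")
      case True then show False using eq by simp
    next
      case False then have "k \<ge> 2" using k by simp
      then have "n * k \<ge> n * 2" by simp
      then show False using eq n2 by linarith
    qed
  next
    case False
    then have "b = pw z k" using k by blast
    then have "pw a n = pw a ((n+1)*k)" using assms(4) z_def by (simp only: pw_mult)
    then have eq: "n = (n+1) * k" using pw_cancel[OF ia] by blast
    have "(n+1) * k \<ge> (n+1) * 1" using k by (intro mult_le_mono2) simp
    then show False using eq by simp
  qed
qed

lemma same_nb: assumes "a \<in> S1" "b \<in> S1" "\<forall>w. Zrel a w = Zrel b w" shows "a = b"
proof -
  have "Zrel a b" using assms(3) by simp
  then have "Nrel a b" using K assms by blast
  then obtain n where "n > 0" "b = pw a n \<or> a = pw b n" unfolding Nrel_def by blast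
  then show ?thesis using H[OF assms] H[OF assms(2,1)] assms(3) by metis
qed

lemma cn: "closed_nbhd (zpower_graph m e) x = {y. Zrel x y}"
  unfolding closed_nbhd_def Z_adj by auto

lemma nbhd: assumes "x \<in> S" shows "nbhd_class (zpower_graph m e) x = {x, iv x}"
proof -
  have "y \<in> {x, iv x}" if "{w. Zrel y w} = {w. Zrel x w}" for y
  proof -
    have "Zrel x y" using that by (metis Zrel_refl mem_Collect_eq)
    then have yS: "y \<in> S" using S_closed assms by blast
    have "\<forall>w. Zrel (rp x) w = Zrel (rp y) w" using that rp(3)[OF assms] rp(3)[OF yS] by blast
    then have "rp x = rp y" using same_nb rp(1) assms yS by blast
    then show ?thesis using rp(2)[OF assms] rp(2)[OF yS] by (metis insertI1 insertI2 iv_iv singletonI)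
  qed
  then show ?thesis unfolding nbhd_class_def cn by auto
qed

lemma Z_reach: "reachable (zpower_graph m e) x0 y \<longleftrightarrow> y \<in> S"
proof
  assume "reachable (zpower_graph m e) x0 y"
  then show "y \<in> S" unfolding reachable_def Z_verts
  proof (induction rule: rtranclp_induct)
    case base then show ?case unfolding S_def S1_def by simp
  next
    case (step y z) then show ?case using S_closed by (auto simp: Z_adj)
  qed
next
  let ?r = "\<lambda>x y. x \<in> verts (zpower_graph m e) \<and> y \<in> verts (zpower_graph m e) \<and> adj (zpower_graph m e) x y"
  have NZ: "reachable (zpower_graph m e) x y" if "reachable (npower_graph m e) x y" for x y
    using that unfolding reachable_def
    by (rule rtranclp_mono[THEN predicate2D, rotated]) (auto simp: N_adj Z_adj Nrel_Zrel)
  have e: "?r x0 (iv x0)"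
  proof -
    have "x0 \<noteq> iv x0" using not_PC_iv[OF io] by (metis PC_refl)
    moreover have "Zrel x0 (iv x0)" by simp
    ultimately show ?thesis by (simp add: Z_adj)
  qed
  assume "y \<in> S"
  then show "reachable (zpower_graph m e) x0 y"
  proof (cases "y \<in> S1")
    case True then show ?thesis using NZ N_reach unfolding S1_def by blast
  next
    case False then have "y \<in> S2" using \<open>y \<in> S\<close> S_def by blast
    then have "reachable (zpower_graph m e) (iv x0) y" using NZ N_reach unfolding S2_def by blast
    then show ?thesis using converse_rtranclp_into_rtranclp[of ?r, OF e] unfolding reachable_def by blast
  qed
qed

end


context palx begin

abbreviation "NG \<equiv> npower_graph m e"
abbreviation "ZG \<equiv> zpower_graph m e"

lemma comp1: "component_of (induced NG S1) NG"
  unfolding component_of_def using N_reach unfolding S1_def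
  by (intro bexI[of _ x0]) auto
lemma comp2: "component_of (induced NG S2) NG"
  unfolding component_of_def using N_reach unfolding S2_def
  by (intro bexI[of _ "iv x0"]) auto

lemma iso12: "graph_iso (induced NG S1) (induced NG S2)"
  unfolding graph_iso_def induced_def fst_conv snd_conv
proof (intro exI conjI ballI)
  show "bij_betw iv S1 S2"
  proof (rule bij_betw_byWitness[where f'=iv])
    show "iv ` S1 \<subseteq> S2" using ivS1 by blast
    show "iv ` S2 \<subseteq> S1" using ivS2 by blast
  qed simp_all
  fix x y assume "x \<in> S1" "y \<in> S1"
  then show "(x \<in> S1 \<and> y \<in> S1 \<and> adj NG x y) = (iv x \<in> S2 \<and> iv y \<in> S2 \<and> adj NG (iv x) (iv y))"
    using ivS1 by (auto simp: N_adj iv_inj)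
qed

lemma Zrel_S1: "a \<in> S1 \<Longrightarrow> b \<in> S1 \<Longrightarrow> Zrel a b \<longleftrightarrow> Nrel a b"
  using K Nrel_Zrel by blast

lemma rp_S1: "a \<in> S1 \<Longrightarrow> rp a = a" unfolding rp_def by simp
lemma rp_S2: "a \<in> S2 \<Longrightarrow> rp a = iv a" unfolding rp_def using disj by auto

lemma iso_sp: "graph_iso (induced ZG S) (strong_product (induced NG S1) P2)"
proof -
  define f where "f z = (rp z, if z \<in> S1 then 0 else (1::nat))" for z
  define g where "g p = (if snd p = (0::nat) then fst p else iv (fst p))" for p
  have vs: "verts (strong_product (induced NG S1) P2) = S1 \<times> {0,1}"
    unfolding strong_product_def induced_def P2_def by simp
  have bij: "bij_betw f S (S1 \<times> {0,1})"
  proof (rule bij_betw_byWitness[where f'=g])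
    show "\<forall>a\<in>S. g (f a) = a" unfolding f_def g_def S_def using rp_S1 rp_S2 by auto
    show "\<forall>a'\<in>S1 \<times> {0, 1}. f (g a') = a'"
    proof
      fix p assume p: "p \<in> S1 \<times> {0::nat, 1}"
      obtain y b where yb: "p = (y, b)" "y \<in> S1" "b = 0 \<or> b = 1" using p by auto
      show "f (g p) = p"
      proof (cases "b = 0")
        case True then show ?thesis using yb rp_S1 unfolding f_def g_def by simp
      next
        case False
        then have b: "b = 1" using yb by simp
        have "iv y \<in> S2" using yb ivS1 by blast
        then have "iv y \<notin> S1" "rp (iv y) = y" using disj rp_S2 by auto
        then show ?thesis using yb b unfolding f_def g_def by simp
      qed
    qed
    show "f ` S \<subseteq> S1 \<times> {0, 1}" unfolding f_def using rp(1) by auto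
    show "g ` (S1 \<times> {0, 1}) \<subseteq> S"
    proof
      fix q assume "q \<in> g ` (S1 \<times> {0, 1})"
      then obtain y b where "q = g (y, b)" "y \<in> S1" by auto
      moreover have "iv y \<in> S2" if "y \<in> S1" using that ivS1 by blast
      ultimately show "q \<in> S" unfolding g_def S_def by auto
    qed
  qed
  have inj: "f z = f w \<longleftrightarrow> z = w" if "z \<in> S" "w \<in> S" for z w
    using bij that unfolding bij_betw_def inj_on_def by blast
  have adj: "adj (induced ZG S) z w = adj (strong_product (induced NG S1) P2) (f z) (f w)"
    if zw: "z \<in> S" "w \<in> S" for z w
  proof -
    have "adj (induced ZG S) z w = (z \<noteq> w \<and> Zrel (rp z) (rp w))"
      unfolding induced_def using zw rp(3)[OF zw(1)] rp(3)[OF zw(2)] Zrel_sym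
      by (auto simp: Z_adj)
    also have "\<dots> = (f z \<noteq> f w \<and> (rp z = rp w \<or> adj (induced NG S1) (rp z) (rp w)))"
    proof -
      have a: "rp z \<in> S1" "rp w \<in> S1" using rp(1) zw by auto
      have "adj (induced NG S1) (rp z) (rp w) = (rp z \<noteq> rp w \<and> Nrel (rp z) (rp w))"
        using a unfolding induced_def by (simp add: N_adj)
      moreover have "Zrel (rp z) (rp w) = Nrel (rp z) (rp w)" using Zrel_S1[OF a] .
      moreover have "(f z \<noteq> f w) = (z \<noteq> w)" using inj[OF zw] by simp
      ultimately show ?thesis by (metis Nrel_refl)
    qed
    also have "\<dots> = adj (strong_product (induced NG S1) P2) (f z) (f w)"
      unfolding strong_product_def P2_def by (simp add: f_def)
    finally show ?thesis .
  qed
  have vS: "verts (induced ZG S) = S" unfolding induced_def by simp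
  show ?thesis unfolding graph_iso_def vs vS
    by (rule exI[of _ f], intro conjI ballI bij adj)
qed

lemma iso_q: "graph_iso (induced NG S1) (quotient_graph (induced ZG S) ZG)"
proof -
  define h where "h x = {x, iv x}" for x
  have hS1: "nbhd_class ZG x = h x" if "x \<in> S" for x using nbhd[OF that] unfolding h_def .
  have self: "x \<in> nbhd_class ZG x" for x unfolding nbhd_class_def by simp
  have Q: "verts (quotient_graph (induced ZG S) ZG) = h ` S1"
  proof -
    have "h ` S1 = {C. \<exists>x. C = nbhd_class ZG x \<and> C \<subseteq> S}"
    proof (intro equalityI subsetI)
      fix C assume "C \<in> h ` S1"
      then obtain x where x: "x \<in> S1" "C = h x" by blast
      have "x \<in> S" using x(1) unfolding S_def by blast
      then have "C = nbhd_class ZG x" using hS1 x(2) by simp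
      moreover have "C \<subseteq> S"
      proof -
        have "iv x \<in> S2" using ivS1 x(1) by blast
        then show ?thesis using x unfolding h_def S_def by blast
      qed
      ultimately show "C \<in> {C. \<exists>x. C = nbhd_class ZG x \<and> C \<subseteq> S}" by blast
    next
      fix C assume "C \<in> {C. \<exists>x. C = nbhd_class ZG x \<and> C \<subseteq> S}"
      then obtain x where x: "C = nbhd_class ZG x" "C \<subseteq> S" by blast
      then have xS: "x \<in> S" using self by blast
      then have "C = h x" using x hS1 by simp
      also have "h x = h (rp x)" using rp(2)[OF xS] unfolding h_def by (metis insert_commute iv_iv)
      finally show "C \<in> h ` S1" using rp(1)[OF xS] by blast
    qed
    moreover have "verts (quotient_graph (induced ZG S) ZG) = {C. \<exists>x. C = nbhd_class ZG x \<and> C \<subseteq> S}"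
      unfolding quotient_graph_def induced_def by simp
    ultimately show ?thesis by simp
  qed
  have inj: "h x = h y \<longleftrightarrow> x = y" if "x \<in> S1" "y \<in> S1" for x y
  proof
    assume "h x = h y"
    then have "x \<in> h y" unfolding h_def by blast
    then have "x = y \<or> x = iv y" unfolding h_def by blast
    then show "x = y" using that ivS1 disj by blast
  qed simp
  have bij: "bij_betw h S1 (verts (quotient_graph (induced ZG S) ZG))"
    unfolding Q bij_betw_def by (intro conjI inj_onI refl) (use inj in blast)
  have adj: "adj (induced NG S1) x y = adj (quotient_graph (induced ZG S) ZG) (h x) (h y)"
    if xy: "x \<in> S1" "y \<in> S1" for x y
  proof -
    have "adj (quotient_graph (induced ZG S) ZG) (h x) (h y) =
      (h x \<noteq> h y \<and> (\<exists>a\<in>h x. \<exists>b\<in>h y. adj ZG a b))" unfolding quotient_graph_def snd_conv by (rule refl)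
    also have "\<dots> = (x \<noteq> y \<and> Zrel x y)"
    proof
      assume A: "h x \<noteq> h y \<and> (\<exists>a\<in>h x. \<exists>b\<in>h y. adj ZG a b)"
      then obtain a b where ab: "a \<in> h x" "b \<in> h y" "adj ZG a b" by blast
      then have "Zrel a b" by (simp only: Z_adj)
      moreover have "a = x \<or> a = iv x" "b = y \<or> b = iv y" using ab unfolding h_def by blast+
      ultimately have "Zrel x y" by (metis Zrel_iv_left Zrel_iv_right)
      moreover have "x \<noteq> y"
      proof
        assume "x = y" then have "h x = h y" by simp
        then show False using A by simp
      qed
      ultimately show "x \<noteq> y \<and> Zrel x y" by blast
    next
      assume "x \<noteq> y \<and> Zrel x y"
      then have "h x \<noteq> h y" "adj ZG x y" using inj[OF xy] by (simp_all only: Z_adj) blast+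
      moreover have "x \<in> h x" "y \<in> h y" unfolding h_def by auto
      ultimately show "h x \<noteq> h y \<and> (\<exists>a\<in>h x. \<exists>b\<in>h y. adj ZG a b)" by blast
    qed
    also have "\<dots> = adj (induced NG S1) x y"
    proof -
      have "adj (induced NG S1) x y = (x \<noteq> y \<and> Nrel x y)"
        using xy unfolding induced_def by (simp add: N_adj)
      then show ?thesis using Zrel_S1[OF xy] by simp
    qed
    finally show ?thesis by simp
  qed
  have vS: "verts (induced NG S1) = S1" unfolding induced_def by simp
  show ?thesis unfolding graph_iso_def vS
    by (rule exI[of _ h], intro conjI ballI bij adj)
qed

lemma main:
  "\<exists>\<Psi>1 \<Psi>2. component_of \<Psi>1 NG \<and> component_of \<Psi>2 NG
    \<and> verts (induced ZG S) = verts \<Psi>1 \<union> verts \<Psi>2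
    \<and> graph_iso \<Psi>1 \<Psi>2
    \<and> graph_iso (induced ZG S) (strong_product \<Psi>1 P2)
    \<and> graph_iso \<Psi>1 (quotient_graph (induced ZG S) ZG)"
  using comp1 comp2 iso12 iso_sp iso_q
proof -
  have "verts (induced ZG S) = verts (induced NG S1) \<union> verts (induced NG S2)"
    unfolding induced_def S_def by simp
  then show ?thesis using comp1 comp2 iso12 iso_sp iso_q by blast
qed

end


theorem mainTheorem4:
  fixes m :: "'a \<Rightarrow> 'a \<Rightarrow> 'a" and e :: 'a and \<Phi> :: "'a graph"
  assumes "loop m e" and "power_assoc m e"
    and "component_of \<Phi> (zpower_graph m e)"
    and "\<exists>x\<in>verts \<Phi>. infinite_order m e x"
  shows "\<exists>\<Psi>1 \<Psi>2. component_of \<Psi>1 (npower_graph m e) \<and> component_of \<Psi>2 (npower_graph m e)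
    \<and> verts \<Phi> = verts \<Psi>1 \<union> verts \<Psi>2
    \<and> graph_iso \<Psi>1 \<Psi>2
    \<and> graph_iso \<Phi> (strong_product \<Psi>1 P2)
    \<and> graph_iso \<Psi>1 (quotient_graph \<Phi> (zpower_graph m e))"
proof -
  obtain x0 where x0: "x0 \<in> verts \<Phi>" "infinite_order m e x0" using assms(4) by blast
  interpret palx m e x0 using assms(1,2) x0(2) by (unfold_locales) auto
  obtain v where v: "\<Phi> = induced ZG {y \<in> verts ZG. reachable ZG v y}"
    using assms(3) unfolding component_of_def by blast
  let ?r = "\<lambda>x y. x \<in> verts ZG \<and> y \<in> verts ZG \<and> adj ZG x y"
  have sym: "?r a b \<Longrightarrow> ?r b a" for a b by (simp add: Z_adj) (metis Zrel_sym)
  have vx: "?r\<^sup>*\<^sup>* v x0" using x0(1) v unfolding induced_def reachable_def by simp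
  have "reachable ZG v y \<longleftrightarrow> reachable ZG x0 y" for y
  proof
    assume "reachable ZG v y"
    then have "?r\<^sup>*\<^sup>* v y" unfolding reachable_def .
    moreover have "?r\<^sup>*\<^sup>* x0 v" using rtranclp_sym[of ?r, OF sym vx] by blast
    ultimately show "reachable ZG x0 y" unfolding reachable_def by (meson rtranclp_trans)
  next
    assume "reachable ZG x0 y"
    then show "reachable ZG v y" using vx unfolding reachable_def by (meson rtranclp_trans)
  qed
  then have "{y \<in> verts ZG. reachable ZG v y} = S" using Z_reach by auto
  then have P: "\<Phi> = induced ZG S" using v by simp
  show ?thesis unfolding P by (rule main)
qed

end
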